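(* Let $K_A,K_B\ge2$, $\nu_A=K_A-1$, $\nu_B=K_B-1$, and let $H$ be a probability distribution on $(0,\infty)^2$. Consider a single unit with $\mu_A=\mu_B$ (null), $(\sigma_A^2,\sigma_B^2)\sim H$, and conditionally on $(\sigma_A^2,\sigma_B^2)$, independent $\hat\mu_A\sim N(\mu_A,\sigma_A^2/K_A)$, $\hat\sigma_A^2\sim(\sigma_A^2/\nu_A)\chi^2_{\nu_A}$, $\hat\mu_B\sim N(\mu_B,\sigma_B^2/K_B)$, $\hat\sigma_B^2\sim(\sigma_B^2/\nu_B)\chi^2_{\nu_B}$. Then almost surely $$\mathbb P_H\big(\mathrm P^{DV}(T^{BF},\hat\sigma_A^2,\hat\sigma_B^2;H)\le\alpha\mid\hat\sigma_A^2,\hat\sigma_B^2\big)=\alpha\quad\text{for all }\alpha\in(0,1),$$ and hence $\mathbb P_H(\mathrm P^{DV}(T^{BF},\hat\sigma_A^2,\hat\sigma_B^2;H)\le\alpha)=\alpha$ for all $\alpha\in(0,1)$, where $\mathbb P_H$ integrates over $(\sigma_A^2,\sigma_B^2)\sim H$ and the data.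
   Context: $T^{BF}=(\hat\mu_A-\hat\mu_B)/\sqrt{\hat\sigma_A^2/K_A+\hat\sigma_B^2/K_B}$. For $t\in\mathbb R$, $s_A^2,s_B^2,\sigma_A^2,\sigma_B^2>0$: $\mathrm P^{DV}(t,s_A^2,s_B^2;\sigma_A^2,\sigma_B^2)=2\Phi\big(-|t|\sqrt{(s_A^2/K_A+s_B^2/K_B)/(\sigma_A^2/K_A+\sigma_B^2/K_B)}\big)$, with $\Phi$ the standard normal CDF. Let $p_\nu(s^2\mid\sigma^2)=\frac{\nu}{\sigma^2}\frac{1}{2^{\nu/2}\Gamma(\nu/2)}(\nu s^2/\sigma^2)^{\nu/2-1}\exp(-\nu s^2/(2\sigma^2))$ be the density of $(\sigma^2/\nu)\chi^2_\nu$, and $p(s_A^2,s_B^2\mid\sigma_A^2,\sigma_B^2)=p_{\nu_A}(s_A^2\mid\sigma_A^2)p_{\nu_B}(s_B^2\mid\sigma_B^2)$. For a distribution $H$ on $(0,\infty)^2$, $$\mathrm P^{DV}(t,s_A^2,s_B^2;H)=\frac{\int\mathrm P^{DV}(t,s_A^2,s_B^2;\sigma_A^2,\sigma_B^2)\,p(s_A^2,s_B^2\mid\sigma_A^2,\sigma_B^2)\,dH}{\int p(s_A^2,s_B^2\mid\sigma_A^2,\sigma_B^2)\,dH}.$$ *)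

theory Defs
  imports "HOL-Probability.Probability"
begin

definition Phi :: "real \<Rightarrow> real" where
  "Phi x = measure (density lborel std_normal_density) {..x}"

text \<open>Density of (sigma2/nu) chi^2_nu at s2 (zero for s2 \<le> 0).\<close>
definition p_nu :: "real \<Rightarrow> real \<Rightarrow> real \<Rightarrow> real" where
  "p_nu \<nu> s2 \<sigma>2 = (if 0 < s2 then
      (\<nu> / \<sigma>2) * (1 / (2 powr (\<nu>/2) * Gamma (\<nu>/2)))
        * (\<nu> * s2 / \<sigma>2) powr (\<nu>/2 - 1) * exp (- \<nu> * s2 / (2 * \<sigma>2))
    else 0)"

definition p_joint :: "nat \<Rightarrow> nat \<Rightarrow> real \<Rightarrow> real \<Rightarrow> real \<times> real \<Rightarrow> real" where
  "p_joint KA KB sA sB \<sigma> =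
     p_nu (real KA - 1) sA (fst \<sigma>) * p_nu (real KB - 1) sB (snd \<sigma>)"

definition PDV :: "nat \<Rightarrow> nat \<Rightarrow> real \<Rightarrow> real \<Rightarrow> real \<Rightarrow> real \<times> real \<Rightarrow> real" where
  "PDV KA KB t sA sB \<sigma> =
     2 * Phi (- \<bar>t\<bar> * sqrt ((sA / real KA + sB / real KB)
                            / (fst \<sigma> / real KA + snd \<sigma> / real KB)))"

definition PDV_H :: "nat \<Rightarrow> nat \<Rightarrow> (real \<times> real) measure \<Rightarrow> real \<Rightarrow> real \<Rightarrow> real \<Rightarrow> real" where
  "PDV_H KA KB H t sA sB =
     (\<integral>\<sigma>. PDV KA KB t sA sB \<sigma> * p_joint KA KB sA sB \<sigma> \<partial>H)
     / (\<integral>\<sigma>. p_joint KA KB sA sB \<sigma> \<partial>H)"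

text \<open>Sample space: ((sigmaA2, sigmaB2), (muhatA, sigmahatA2, muhatB, sigmahatB2)).\<close>
type_synonym bf_outcome = "(real \<times> real) \<times> (real \<times> real \<times> real \<times> real)"

definition muhatA :: "bf_outcome \<Rightarrow> real" where "muhatA \<omega> = fst (snd \<omega>)"
definition sighatA :: "bf_outcome \<Rightarrow> real" where "sighatA \<omega> = fst (snd (snd \<omega>))"
definition muhatB :: "bf_outcome \<Rightarrow> real" where "muhatB \<omega> = fst (snd (snd (snd \<omega>)))"
definition sighatB :: "bf_outcome \<Rightarrow> real" where "sighatB \<omega> = snd (snd (snd (snd \<omega>)))"

definition bf_model :: "(real \<times> real) measure \<Rightarrow> nat \<Rightarrow> nat \<Rightarrow> real \<Rightarrow> real \<Rightarrow> bf_outcome measure" where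
  "bf_model H KA KB \<mu>A \<mu>B =
     density (H \<Otimes>\<^sub>M (lborel \<Otimes>\<^sub>M lborel \<Otimes>\<^sub>M lborel \<Otimes>\<^sub>M lborel))
       (\<lambda>(\<sigma>, (mA, sA, mB, sB)). ennreal (
          normal_density \<mu>A (sqrt (fst \<sigma> / real KA)) mA * p_nu (real KA - 1) sA (fst \<sigma>)
        * normal_density \<mu>B (sqrt (snd \<sigma> / real KB)) mB * p_nu (real KB - 1) sB (snd \<sigma>)))"

definition T_BF :: "nat \<Rightarrow> nat \<Rightarrow> bf_outcome \<Rightarrow> real" where
  "T_BF KA KB \<omega> = (muhatA \<omega> - muhatB \<omega>)
      / sqrt (sighatA \<omega> / real KA + sighatB \<omega> / real KB)"

end

theory Submission
  imports Defs
begin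

lemma real_distribution_std: "real_distribution (density lborel std_normal_density)"
  unfolding real_distribution_def real_distribution_axioms_def
  by (auto simp: prob_space_normal_density)

lemma Phi_cdf: "Phi = cdf (density lborel std_normal_density)"
  by (rule ext) (simp add: Phi_def cdf_def)

lemma Phi_mono: "x \<le> y \<Longrightarrow> Phi x \<le> Phi y"
  unfolding Phi_cdf using finite_borel_measure.cdf_nondecreasing[OF real_distribution.finite_borel_measure_M[OF real_distribution_std]] by blast

lemma Phi_nonneg: "0 \<le> Phi x" by (simp add: Phi_def)

lemma Phi_le1: "Phi x \<le> 1"
  unfolding Phi_cdf using real_distribution.cdf_bounded_prob[OF real_distribution_std] by blast

lemma Phi_at_bot: "(Phi \<longlongrightarrow> 0) at_bot"
  unfolding Phi_cdf using finite_borel_measure.cdf_lim_at_bot real_distribution.finite_borel_measure_M[OF real_distribution_std] by blast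

lemma Phi_isCont: "isCont Phi x"
proof -
  have "emeasure (density lborel std_normal_density) {x} = 0"
    by (subst emeasure_density) (auto intro!: nn_integral_null_set simp: null_sets_def)
  then have "measure (density lborel std_normal_density) {x} = 0" by (simp add: measure_def)
  then show ?thesis unfolding Phi_cdf
    using finite_borel_measure.isCont_cdf real_distribution.finite_borel_measure_M[OF real_distribution_std] by blast
qed

lemma Phi_measurable[measurable]: "Phi \<in> borel_measurable borel"
  by (rule borel_measurable_mono) (auto simp: mono_def Phi_mono)

lemma nd_scale: "0 < s \<Longrightarrow> normal_density 0 s (s * u) * s = std_normal_density u"
  by (simp add: normal_density_def real_sqrt_mult power_mult_distrib field_simps)

lemma std_sym: "std_normal_density (- u) = std_normal_density u"
  by (simp add: normal_density_def)

lemma Phi_nn: "(\<integral>\<^sup>+u. indicator {..x} u * ennreal (std_normal_density u) \<partial>lborel) = ennreal (Phi x)"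
proof -
  interpret prob_space "density lborel std_normal_density" using prob_space_normal_density by auto
  have "emeasure (density lborel std_normal_density) {..x} = ennreal (Phi x)"
    unfolding Phi_def by (rule emeasure_eq_measure)
  then show ?thesis by (simp add: emeasure_density mult.commute)
qed

lemma std_tail:
  assumes "0 \<le> q"
  shows "(\<integral>\<^sup>+u. indicator {u. q \<le> \<bar>u\<bar>} u * ennreal (std_normal_density u) \<partial>lborel) = ennreal (2 * Phi (- q))"
proof -
  have ae1: "AE u in lborel. u \<noteq> q" by (rule AE_lborel_singleton)
  have ae2: "AE u in lborel. u \<noteq> -q" by (rule AE_lborel_singleton)
  have "(\<integral>\<^sup>+u. indicator {u. q \<le> \<bar>u\<bar>} u * ennreal (std_normal_density u) \<partial>lborel)
     = (\<integral>\<^sup>+u. indicator {..-q} u * ennreal (std_normal_density u) + indicator {q<..} u * ennreal (std_normal_density u) \<partial>lborel)"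
    apply (rule nn_integral_cong_AE) using ae1 apply eventually_elim
    using assms by (auto simp: indicator_def)
  also have "\<dots> = (\<integral>\<^sup>+u. indicator {..-q} u * ennreal (std_normal_density u) \<partial>lborel) + (\<integral>\<^sup>+u. indicator {q<..} u * ennreal (std_normal_density u) \<partial>lborel)"
    by (rule nn_integral_add) auto
  also have "(\<integral>\<^sup>+u. indicator {q<..} u * ennreal (std_normal_density u) \<partial>lborel)
      = (\<integral>\<^sup>+u. indicator {q<..} (0 + (-1) * u) * ennreal (std_normal_density (0 + (-1) * u)) \<partial>lborel)"
    by (subst nn_integral_real_affine[where c="-1" and t=0]) auto
  also have "\<dots> = (\<integral>\<^sup>+u. indicator {..-q} u * ennreal (std_normal_density u) \<partial>lborel)"
    apply (rule nn_integral_cong_AE) using ae2 apply eventually_elim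
    by (auto simp: indicator_def std_sym)
  finally have "(\<integral>\<^sup>+u. indicator {u. q \<le> \<bar>u\<bar>} u * ennreal (std_normal_density u) \<partial>lborel) = ennreal (Phi (-q)) + ennreal (Phi (-q))"
    by (simp add: Phi_nn)
  also have "\<dots> = ennreal (2 * Phi (- q))" using Phi_nonneg[of "-q"] by (simp add: ennreal_plus[symmetric] del: ennreal_plus)
  finally show ?thesis .
qed

lemma nd_tail:
  assumes "0 \<le> r" "0 < s"
  shows "(\<integral>\<^sup>+z. indicator {z. r \<le> \<bar>z\<bar>} z * ennreal (normal_density 0 s z) \<partial>lborel) = ennreal (2 * Phi (- (r / s)))"
proof -
  have "(\<integral>\<^sup>+z. indicator {z. r \<le> \<bar>z\<bar>} z * ennreal (normal_density 0 s z) \<partial>lborel)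
    = s * (\<integral>\<^sup>+u. indicator {z. r \<le> \<bar>z\<bar>} (0 + s * u) * ennreal (normal_density 0 s (0 + s * u)) \<partial>lborel)"
    using assms by (subst nn_integral_real_affine[where c=s and t=0]) auto
  also have "\<dots> = (\<integral>\<^sup>+u. indicator {u. r / s \<le> \<bar>u\<bar>} u * ennreal (std_normal_density u) \<partial>lborel)"
    apply (subst nn_integral_cmult[symmetric]) apply simp
    apply (rule nn_integral_cong)
    using assms nd_scale[of s]
    by (auto simp: indicator_def ennreal_mult'[symmetric] abs_mult field_simps mult.commute)
  also have "\<dots> = ennreal (2 * Phi (- (r / s)))"
    using assms by (intro std_tail) auto
  finally show ?thesis .
qed

lemma nd_shift: "normal_density \<mu> a x = normal_density 0 a (x - \<mu>)"
  by (simp add: normal_density_def)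

lemma nd_sym0: "normal_density 0 a (- x) = normal_density 0 a x"
  by (simp add: normal_density_def)

lemma nd_diff:
  assumes a: "0 < a" and b: "0 < b" and r: "0 \<le> r"
  shows "(\<integral>\<^sup>+x. \<integral>\<^sup>+y. ennreal (normal_density \<mu> a x * normal_density \<mu> b y) * indicator {z. r \<le> \<bar>z\<bar>} (x - y) \<partial>lborel \<partial>lborel)
     = ennreal (2 * Phi (- (r / sqrt (a\<^sup>2 + b\<^sup>2))))"
proof -
  let ?I = "indicator {z. r \<le> \<bar>z\<bar>} :: real \<Rightarrow> ennreal"
  have "(\<integral>\<^sup>+x. \<integral>\<^sup>+y. ennreal (normal_density \<mu> a x * normal_density \<mu> b y) * ?I (x - y) \<partial>lborel \<partial>lborel)
      = (\<integral>\<^sup>+y. \<integral>\<^sup>+x. ennreal (normal_density \<mu> a x * normal_density \<mu> b y) * ?I (x - y) \<partial>lborel \<partial>lborel)"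
    by (rule lborel_pair.Fubini'[symmetric]) simp
  also have "\<dots> = (\<integral>\<^sup>+y. \<integral>\<^sup>+z. ennreal (normal_density \<mu> a (y + 1 * z) * normal_density \<mu> b y) * ?I ((y + 1 * z) - y) \<partial>lborel \<partial>lborel)"
  proof (rule nn_integral_cong)
    fix y
    show "(\<integral>\<^sup>+x. ennreal (normal_density \<mu> a x * normal_density \<mu> b y) * ?I (x - y) \<partial>lborel)
       = (\<integral>\<^sup>+z. ennreal (normal_density \<mu> a (y + 1 * z) * normal_density \<mu> b y) * ?I ((y + 1 * z) - y) \<partial>lborel)"
      by (subst nn_integral_real_affine[where c=1 and t=y]) auto
  qed
  also have "\<dots> = (\<integral>\<^sup>+z. \<integral>\<^sup>+y. ennreal (normal_density \<mu> a (y + z) * normal_density \<mu> b y) * ?I z \<partial>lborel \<partial>lborel)"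
    by (subst lborel_pair.Fubini') simp_all
  also have "\<dots> = (\<integral>\<^sup>+z. ?I z * (\<integral>\<^sup>+y. ennreal (normal_density \<mu> a (y + z) * normal_density \<mu> b y) \<partial>lborel) \<partial>lborel)"
    by (rule nn_integral_cong, subst nn_integral_cmult[symmetric]) (auto simp: mult.commute)
  also have "\<dots> = (\<integral>\<^sup>+z. ?I z * ennreal (normal_density 0 (sqrt (a\<^sup>2 + b\<^sup>2)) z) \<partial>lborel)"
  proof (rule nn_integral_cong)
    fix z
    have "(\<integral>\<^sup>+y. ennreal (normal_density \<mu> a (y + z) * normal_density \<mu> b y) \<partial>lborel)
      = (\<integral>\<^sup>+w. ennreal (normal_density \<mu> a ((\<mu> + (-1) * w) + z) * normal_density \<mu> b (\<mu> + (-1) * w)) \<partial>lborel)"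
      by (subst nn_integral_real_affine[where c="-1" and t=\<mu>]) auto
    also have "\<dots> = (\<integral>\<^sup>+w. ennreal (normal_density 0 a (z - w) * normal_density 0 b w) \<partial>lborel)"
      by (rule nn_integral_cong) (simp add: normal_density_def power2_eq_square algebra_simps)
    also have "\<dots> = ennreal (normal_density 0 (sqrt (a\<^sup>2 + b\<^sup>2)) z)"
      using conv_normal_density_zero_mean[OF a b] by metis
    finally show "?I z * (\<integral>\<^sup>+y. ennreal (normal_density \<mu> a (y + z) * normal_density \<mu> b y) \<partial>lborel)
        = ?I z * ennreal (normal_density 0 (sqrt (a\<^sup>2 + b\<^sup>2)) z)" by simp
  qed
  also have "\<dots> = ennreal (2 * Phi (- (r / sqrt (a\<^sup>2 + b\<^sup>2))))"
    using a b by (intro nd_tail[OF r]) (simp add: add_pos_pos)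
  finally show ?thesis .
qed

lemma p_nu_measurable[measurable (raw)]:
  assumes [measurable]: "f \<in> borel_measurable M" "g \<in> borel_measurable M"
  shows "(\<lambda>x. p_nu \<nu> (f x) (g x)) \<in> borel_measurable M"
  unfolding p_nu_def by measurable

lemma p_nu_nonneg: "0 < \<sigma> \<Longrightarrow> 0 < \<nu> \<Longrightarrow> 0 \<le> p_nu \<nu> s \<sigma>"
  unfolding p_nu_def by (auto intro!: divide_nonneg_nonneg mult_nonneg_nonneg Gamma_real_nonneg)

lemma p_nu_int:
  assumes nu: "0 < \<nu>" and sig: "0 < \<sigma>"
  shows "(\<integral>\<^sup>+s. ennreal (p_nu \<nu> s \<sigma>) \<partial>lborel) = 1"
proof -
  define k where "k = \<nu> / 2"
  define c where "c = 2 * \<sigma> / \<nu>"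
  have k: "0 < k" and c: "0 < c" using nu sig by (auto simp: k_def c_def)
  have G: "0 < Gamma k" using k by (rule Gamma_real_pos)
  have pw: "c * p_nu \<nu> (c * u) \<sigma> = (1 / Gamma k) * ((u powr (k - 1) / exp u) * indicator {0..} u)" for u
  proof (cases "0 < u")
    case True
    have e1: "\<nu> * (c * u) / \<sigma> = 2 * u" using nu sig by (simp add: c_def field_simps)
    have e2: "- \<nu> * (c * u) / (2 * \<sigma>) = - u" using nu sig by (simp add: c_def field_simps)
    have e3: "c * (\<nu> / \<sigma>) = 2" using nu sig by (simp add: c_def field_simps)
    have e4: "(2 * u) powr (k - 1) = 2 powr (k - 1) * u powr (k - 1)"
      using True by (simp add: powr_mult)
    have e5: "2 * 2 powr (k - 1) = (2 powr k :: real)"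
      by (simp add: powr_diff)
    have "c * p_nu \<nu> (c * u) \<sigma> = (c * (\<nu> / \<sigma>)) * (1 / (2 powr k * Gamma k)) * (2 * u) powr (k - 1) * exp (- u)"
      using True c unfolding p_nu_def k_def[symmetric] e1 e2 by (simp add: mult_ac)
    also have "\<dots> = (2 * 2 powr (k - 1)) / (2 powr k) * (1 / Gamma k) * u powr (k - 1) * exp (- u)"
      unfolding e3 e4 by (simp add: field_simps)
    also have "\<dots> = (1 / Gamma k) * ((u powr (k - 1) / exp u) * indicator {0..} u)"
      unfolding e5 using True by (simp add: exp_minus field_simps)
    finally show ?thesis .
  next
    case False
    then have "c * u \<le> 0" using c by (simp add: mult_nonneg_nonpos)
    then show ?thesis using False by (auto simp: p_nu_def indicator_def)
  qed
  have "(\<integral>\<^sup>+s. ennreal (p_nu \<nu> s \<sigma>) \<partial>lborel) = c * (\<integral>\<^sup>+u. ennreal (p_nu \<nu> (0 + c * u) \<sigma>) \<partial>lborel)"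
    using c by (subst nn_integral_real_affine[where c=c and t=0]) auto
  also have "\<dots> = (\<integral>\<^sup>+u. ennreal (c * p_nu \<nu> (c * u) \<sigma>) \<partial>lborel)"
    using c by (subst nn_integral_cmult[symmetric]) (auto simp: ennreal_mult' intro!: nn_integral_cong)
  also have "\<dots> = (\<integral>\<^sup>+u. ennreal (1 / Gamma k) * (ennreal (u powr (k - 1) / exp u) * indicator {0..} u) \<partial>lborel)"
    unfolding pw using G by (intro nn_integral_cong) (auto simp: ennreal_mult'[symmetric] indicator_def)
  also have "\<dots> = ennreal (1 / Gamma k) * ennreal (Gamma k)"
    apply (subst nn_integral_cmult) apply simp
    apply (subst nn_integral_has_integral_lebesgue'[OF _ Gamma_integral_real[OF k]])
    by auto
  also have "\<dots> = 1" using G by (simp add: ennreal_mult[symmetric])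
  finally show ?thesis .
qed

lemma powr_exp_bound:
  fixes x k :: real assumes x: "0 < x" and k: "0 < k"
  shows "x powr k \<le> (2 * k) powr k * exp (x / 2)"
proof -
  define y where "y = x / (2 * k)"
  have y: "0 \<le> y" using x k by (simp add: y_def)
  have "y \<le> exp y" using exp_ge_add_one_self[of y] by linarith
  then have "y powr k \<le> (exp y) powr k" using y k by (intro powr_mono2) auto
  also have "(exp y) powr k = exp (x / 2)" using k by (simp add: powr_def y_def field_simps)
  finally have "y powr k \<le> exp (x / 2)" .
  moreover have "y powr k = x powr k / (2 * k) powr k" using x k by (simp add: y_def powr_divide)
  ultimately show ?thesis using k by (simp add: divide_le_eq mult.commute)
qed

lemma p_nu_bound:
  assumes nu: "0 < \<nu>" and s: "0 < s" and sig: "0 < \<sigma>"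
  shows "p_nu \<nu> s \<sigma> \<le> (1 / (2 powr (\<nu>/2) * Gamma (\<nu>/2))) / s * \<nu> powr (\<nu>/2)"
proof -
  define x where "x = \<nu> * s / \<sigma>"
  define K where "K = 1 / (2 powr (\<nu>/2) * Gamma (\<nu>/2))"
  have x: "0 < x" using nu s sig by (simp add: x_def)
  have K: "0 \<le> K" using nu Gamma_real_pos[of "\<nu>/2"] by (simp add: K_def)
  have "p_nu \<nu> s \<sigma> = K / s * (x * x powr (\<nu>/2 - 1)) * exp (- x / 2)"
    using s sig unfolding p_nu_def K_def[symmetric] x_def by (simp add: field_simps)
  also have "x * x powr (\<nu>/2 - 1) = x powr (\<nu>/2)"
    using x by (simp add: powr_diff)
  also have "K / s * x powr (\<nu>/2) * exp (- x / 2) \<le> K / s * (\<nu> powr (\<nu>/2) * exp (x / 2)) * exp (- x / 2)"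
    using powr_exp_bound[OF x, of "\<nu>/2"] nu K s
    by (intro mult_right_mono mult_left_mono) auto
  also have "\<dots> = K / s * \<nu> powr (\<nu>/2)"
    by (simp add: exp_minus field_simps)
  finally show ?thesis unfolding K_def .
qed

lemma p_nu_pos: "0 < \<nu> \<Longrightarrow> 0 < s \<Longrightarrow> 0 < \<sigma> \<Longrightarrow> 0 < p_nu \<nu> s \<sigma>"
  unfolding p_nu_def by (auto intro!: mult_pos_pos divide_pos_pos Gamma_real_pos)

lemma PDV_measurable[measurable (raw)]:
  assumes [measurable]: "f \<in> borel_measurable M" "g \<in> borel_measurable M" "h \<in> borel_measurable M" "k \<in> borel_measurable M"
  shows "(\<lambda>x. PDV KA KB (f x) (g x) (h x) (k x)) \<in> borel_measurable M"
proof -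
  have [measurable]: "k \<in> M \<rightarrow>\<^sub>M borel \<Otimes>\<^sub>M borel" using assms by (simp add: borel_prod)
  show ?thesis unfolding PDV_def by measurable
qed

lemma p_joint_measurable[measurable (raw)]:
  assumes [measurable]: "g \<in> borel_measurable M" "h \<in> borel_measurable M" "k \<in> borel_measurable M"
  shows "(\<lambda>x. p_joint KA KB (g x) (h x) (k x)) \<in> borel_measurable M"
proof -
  have [measurable]: "k \<in> M \<rightarrow>\<^sub>M borel \<Otimes>\<^sub>M borel" using assms by (simp add: borel_prod)
  show ?thesis unfolding p_joint_def by measurable
qed

lemma Phi0: "Phi 0 = 1 / 2"
proof -
  interpret prob_space "density lborel std_normal_density" using prob_space_normal_density by auto
  have "(\<integral>\<^sup>+u. indicator {u. 0 \<le> \<bar>u\<bar>} u * ennreal (std_normal_density u) \<partial>lborel) = 1"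
    using emeasure_space_1 by (simp add: emeasure_density)
  with std_tail[of 0] have "ennreal (2 * Phi 0) = 1" by simp
  then have "2 * Phi 0 = 1" using Phi_nonneg[of 0] by (simp add: ennreal_eq_1)
  then show ?thesis by simp
qed

lemma PDV_nonneg: "0 \<le> PDV KA KB t sA sB \<sigma>"
  by (simp add: PDV_def Phi_nonneg)

lemma PDV_le2: "PDV KA KB t sA sB \<sigma> \<le> 2"
  using Phi_le1 by (simp add: PDV_def)

lemma PDV_0: "PDV KA KB 0 sA sB \<sigma> = 1"
  by (simp add: PDV_def Phi0)

lemma PDV_abs: "PDV KA KB \<bar>t\<bar> sA sB \<sigma> = PDV KA KB t sA sB \<sigma>"
  by (simp add: PDV_def)

lemma PDV_mono: "\<bar>t\<bar> \<le> \<bar>t'\<bar> \<Longrightarrow> 0 \<le> sA \<Longrightarrow> 0 \<le> sB \<Longrightarrow> 0 < fst \<sigma> \<Longrightarrow> 0 < snd \<sigma> \<Longrightarrow> PDV KA KB t' sA sB \<sigma> \<le> PDV KA KB t sA sB \<sigma>"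
  unfolding PDV_def by (intro mult_left_mono Phi_mono mult_right_mono) (auto intro!: divide_nonneg_pos add_pos_nonneg)

context
  fixes H :: "(real \<times> real) measure" and KA KB :: nat and sA sB :: real
  assumes KA: "2 \<le> KA" and KB: "2 \<le> KB" and H: "prob_space H"
    and sH[measurable_cong]: "sets H = sets (borel :: (real \<times> real) measure)"
    and pos: "AE \<sigma> in H. 0 < fst \<sigma> \<and> 0 < snd \<sigma>"
    and sA: "0 < sA" and sB: "0 < sB"
begin

interpretation H: prob_space H by (rule H)

lemma W_meas[measurable]: "(\<lambda>\<sigma>. p_joint KA KB sA sB \<sigma>) \<in> borel_measurable H"
  by measurable

lemma PDV_meas[measurable]: "(\<lambda>\<sigma>. PDV KA KB t sA sB \<sigma>) \<in> borel_measurable H"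
  by measurable

lemma W_pos: "AE \<sigma> in H. 0 < p_joint KA KB sA sB \<sigma>"
  using pos by eventually_elim (use KA KB sA sB in \<open>auto simp: p_joint_def intro!: mult_pos_pos p_nu_pos\<close>)

lemma W_int: "integrable H (\<lambda>\<sigma>. p_joint KA KB sA sB \<sigma>)"
proof -
  define CA where "CA = (1 / (2 powr ((real KA - 1)/2) * Gamma ((real KA - 1)/2))) / sA * (real KA - 1) powr ((real KA - 1)/2)"
  define CB where "CB = (1 / (2 powr ((real KB - 1)/2) * Gamma ((real KB - 1)/2))) / sB * (real KB - 1) powr ((real KB - 1)/2)"
  show ?thesis
  proof (rule H.integrable_const_bound[where B="CA * CB"])
    show "AE \<sigma> in H. norm (p_joint KA KB sA sB \<sigma>) \<le> CA * CB"
      using pos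
    proof eventually_elim
      case (elim \<sigma>)
      have a: "p_nu (real KA - 1) sA (fst \<sigma>) \<le> CA" unfolding CA_def
        using KA sA elim by (intro p_nu_bound) auto
      have b: "p_nu (real KB - 1) sB (snd \<sigma>) \<le> CB" unfolding CB_def
        using KB sB elim by (intro p_nu_bound) auto
      have a0: "0 \<le> p_nu (real KA - 1) sA (fst \<sigma>)" using KA elim by (intro p_nu_nonneg) auto
      have b0: "0 \<le> p_nu (real KB - 1) sB (snd \<sigma>)" using KB elim by (intro p_nu_nonneg) auto
      show ?case using a b a0 b0 by (simp add: p_joint_def abs_mult mult_mono)
    qed
  qed measurable
qed

lemma Z_pos: "0 < (\<integral>\<sigma>. p_joint KA KB sA sB \<sigma> \<partial>H)"
proof -
  have ge: "0 \<le> (\<integral>\<sigma>. p_joint KA KB sA sB \<sigma> \<partial>H)"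
    using W_pos by (intro integral_nonneg_AE) (auto elim: eventually_mono)
  have "(\<integral>\<sigma>. p_joint KA KB sA sB \<sigma> \<partial>H) \<noteq> 0"
  proof
    assume "(\<integral>\<sigma>. p_joint KA KB sA sB \<sigma> \<partial>H) = 0"
    then have "AE \<sigma> in H. p_joint KA KB sA sB \<sigma> = 0"
      using W_int W_pos by (subst (asm) integral_nonneg_eq_0_iff_AE) (auto elim: eventually_mono)
    with W_pos have "AE \<sigma> in H. False" by eventually_elim auto
    then show False by (simp add: H.AE_False)
  qed
  with ge show ?thesis by simp
qed

lemma PW_int: "integrable H (\<lambda>\<sigma>. PDV KA KB t sA sB \<sigma> * p_joint KA KB sA sB \<sigma>)"
proof (rule Bochner_Integration.integrable_bound[OF integrable_mult_right[OF W_int, of 2]])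
  show "AE \<sigma> in H. norm (PDV KA KB t sA sB \<sigma> * p_joint KA KB sA sB \<sigma>) \<le> norm (2 * p_joint KA KB sA sB \<sigma>)"
    using W_pos by eventually_elim (auto simp: abs_mult PDV_nonneg intro!: mult_right_mono PDV_le2)
qed measurable

lemma PW_bound: "AE \<sigma> in H. norm (PDV KA KB t sA sB \<sigma> * p_joint KA KB sA sB \<sigma>) \<le> 2 * p_joint KA KB sA sB \<sigma>"
  using W_pos by eventually_elim (auto simp: abs_mult PDV_nonneg intro!: mult_right_mono PDV_le2)

lemma G_0: "PDV_H KA KB H 0 sA sB = 1"
  using Z_pos by (simp add: PDV_H_def PDV_0)

lemma G_abs: "PDV_H KA KB H \<bar>t\<bar> sA sB = PDV_H KA KB H t sA sB"
  by (simp add: PDV_H_def PDV_abs)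

lemma G_mono: "\<bar>t\<bar> \<le> \<bar>t'\<bar> \<Longrightarrow> PDV_H KA KB H t' sA sB \<le> PDV_H KA KB H t sA sB"
proof -
  assume tt: "\<bar>t\<bar> \<le> \<bar>t'\<bar>"
  have "AE \<sigma> in H. PDV KA KB t' sA sB \<sigma> * p_joint KA KB sA sB \<sigma> \<le> PDV KA KB t sA sB \<sigma> * p_joint KA KB sA sB \<sigma>"
    using W_pos pos by eventually_elim (use tt sA sB in \<open>auto intro!: mult_right_mono PDV_mono\<close>)
  then show ?thesis
    unfolding PDV_H_def using Z_pos by (intro divide_right_mono integral_mono_AE PW_int) auto
qed

lemma G_cont: "isCont (\<lambda>t. PDV_H KA KB H t sA sB) t"
proof (rule continuous_at_sequentiallyI)
  fix u :: "nat \<Rightarrow> real" assume u: "u \<longlonglongrightarrow> t"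
  have "(\<lambda>n. \<integral>\<sigma>. PDV KA KB (u n) sA sB \<sigma> * p_joint KA KB sA sB \<sigma> \<partial>H)
      \<longlonglongrightarrow> (\<integral>\<sigma>. PDV KA KB t sA sB \<sigma> * p_joint KA KB sA sB \<sigma> \<partial>H)"
  proof (rule integral_dominated_convergence[where w="\<lambda>\<sigma>. 2 * p_joint KA KB sA sB \<sigma>"])
    show "integrable H (\<lambda>\<sigma>. 2 * p_joint KA KB sA sB \<sigma>)" using W_int by simp
    show "AE \<sigma> in H. (\<lambda>n. PDV KA KB (u n) sA sB \<sigma> * p_joint KA KB sA sB \<sigma>) \<longlonglongrightarrow> PDV KA KB t sA sB \<sigma> * p_joint KA KB sA sB \<sigma>"
    proof (rule AE_I2)
      fix \<sigma>
      show "(\<lambda>n. PDV KA KB (u n) sA sB \<sigma> * p_joint KA KB sA sB \<sigma>) \<longlonglongrightarrow> PDV KA KB t sA sB \<sigma> * p_joint KA KB sA sB \<sigma>"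
        unfolding PDV_def
        by (intro tendsto_intros isCont_tendsto_compose[OF Phi_isCont] u)
    qed
    show "AE \<sigma> in H. norm (PDV KA KB (u n) sA sB \<sigma> * p_joint KA KB sA sB \<sigma>) \<le> 2 * p_joint KA KB sA sB \<sigma>" for n
      by (rule PW_bound)
  qed measurable
  then show "(\<lambda>n. PDV_H KA KB H (u n) sA sB) \<longlonglongrightarrow> PDV_H KA KB H t sA sB"
    unfolding PDV_H_def using Z_pos by (intro tendsto_divide tendsto_const) auto
qed

lemma G_lim: "((\<lambda>t. PDV_H KA KB H t sA sB) \<longlongrightarrow> 0) at_top"
proof -
  have "((\<lambda>t. \<integral>\<sigma>. PDV KA KB t sA sB \<sigma> * p_joint KA KB sA sB \<sigma> \<partial>H) \<longlongrightarrow> (\<integral>\<sigma>. 0 \<partial>H)) at_top"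
  proof (rule integral_dominated_convergence_at_top[where w="\<lambda>\<sigma>. 2 * p_joint KA KB sA sB \<sigma>"])
    show "integrable H (\<lambda>\<sigma>. 2 * p_joint KA KB sA sB \<sigma>)" using W_int by simp
    show "\<forall>\<^sub>F i in at_top. AE \<sigma> in H. norm (PDV KA KB i sA sB \<sigma> * p_joint KA KB sA sB \<sigma>) \<le> 2 * p_joint KA KB sA sB \<sigma>"
      by (intro always_eventually allI PW_bound)
    show "AE \<sigma> in H. ((\<lambda>t. PDV KA KB t sA sB \<sigma> * p_joint KA KB sA sB \<sigma>) \<longlongrightarrow> 0) at_top"
      using pos
    proof eventually_elim
      case (elim \<sigma>)
      define q where "q = sqrt ((sA / real KA + sB / real KB) / (fst \<sigma> / real KA + snd \<sigma> / real KB))"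
      have q: "0 < q" unfolding q_def using elim sA sB KA KB by (auto intro!: divide_pos_pos add_pos_pos)
      have "filterlim (\<lambda>t. q * t) at_top at_top"
        using q by (intro filterlim_tendsto_pos_mult_at_top[OF tendsto_const] filterlim_ident)
      then have L: "filterlim (\<lambda>t. - (q * t)) at_bot at_top"
        by (simp add: filterlim_uminus_at_top)
      have Ev: "\<forall>\<^sub>F t in at_top. - (q * t) = - \<bar>t\<bar> * q"
        using eventually_ge_at_top[of "0::real"] by eventually_elim auto
      have "filterlim (\<lambda>t. - \<bar>t\<bar> * q) at_bot at_top"
        by (rule filterlim_mono_eventually[OF L order_refl order_refl Ev])
      then have "((\<lambda>t. Phi (- \<bar>t\<bar> * q)) \<longlongrightarrow> 0) at_top"
        by (rule filterlim_compose[OF Phi_at_bot])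
      then have "((\<lambda>t. 2 * Phi (- \<bar>t\<bar> * q) * p_joint KA KB sA sB \<sigma>) \<longlongrightarrow> 2 * 0 * p_joint KA KB sA sB \<sigma>) at_top"
        by (intro tendsto_intros)
      then show ?case by (simp add: PDV_def q_def)
    qed
  qed measurable
  then show ?thesis unfolding PDV_H_def by (auto intro: tendsto_divide_zero)
qed

lemma G_thresh:
  assumes "0 < \<alpha>" "\<alpha> < 1"
  shows "\<exists>t0\<ge>0. PDV_H KA KB H t0 sA sB = \<alpha> \<and> (\<forall>t. PDV_H KA KB H t sA sB \<le> \<alpha> \<longleftrightarrow> t0 \<le> \<bar>t\<bar>)"
proof -
  let ?G = "\<lambda>t. PDV_H KA KB H t sA sB"
  define S where "S = {t. 0 \<le> t \<and> ?G t \<le> \<alpha>}"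
  have "\<forall>\<^sub>F t in at_top. ?G t < \<alpha>"
    using G_lim assms(1) by (rule order_tendstoD)
  then obtain T where T: "\<And>t. T \<le> t \<Longrightarrow> ?G t < \<alpha>" by (auto simp: eventually_at_top_linorder)
  have "max T 0 \<in> S" using T[of "max T 0"] by (auto simp: S_def)
  then have ne: "S \<noteq> {}" by auto
  have bdd: "bdd_below S" by (auto simp: S_def bdd_below_def)
  have cont: "continuous_on A ?G" for A
    using G_cont by (simp add: continuous_at_imp_continuous_on)
  have cl: "closed S" unfolding S_def
    by (intro closed_Collect_conj closed_Collect_le continuous_on_id continuous_on_const cont)
  define t0 where "t0 = Inf S"
  have t0S: "t0 \<in> S" unfolding t0_def using ne bdd cl by (rule closed_contains_Inf)
  then have t0: "0 \<le> t0" "?G t0 \<le> \<alpha>" by (auto simp: S_def)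
  obtain x where x: "0 \<le> x" "x \<le> t0" "?G x = \<alpha>"
    using IVT2'[of ?G t0 \<alpha> 0] t0 G_0 assms cont by auto
  then have "x \<in> S" by (auto simp: S_def)
  then have "t0 \<le> x" unfolding t0_def using bdd by (rule cInf_lower)
  with x have Gt0: "?G t0 = \<alpha>" by auto
  have "?G t \<le> \<alpha> \<longleftrightarrow> t0 \<le> \<bar>t\<bar>" for t
  proof
    assume "?G t \<le> \<alpha>"
    then have "\<bar>t\<bar> \<in> S" by (auto simp: S_def G_abs)
    then show "t0 \<le> \<bar>t\<bar>" unfolding t0_def using bdd by (rule cInf_lower)
  next
    assume "t0 \<le> \<bar>t\<bar>"
    then have "?G t \<le> ?G t0" using t0 by (intro G_mono) auto
    then show "?G t \<le> \<alpha>" using Gt0 by simp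
  qed
  with t0 Gt0 show ?thesis by blast
qed

end

lemma PDV_H_meas[measurable (raw)]:
  assumes sf: "sigma_finite_measure H" and sH: "sets H = sets (borel :: (real \<times> real) measure)"
    and [measurable]: "f \<in> borel_measurable N" "g \<in> borel_measurable N" "k \<in> borel_measurable N"
  shows "(\<lambda>x. PDV_H KA KB H (f x) (g x) (k x)) \<in> borel_measurable N"
proof -
  have S: "sets (N \<Otimes>\<^sub>M H) = sets (N \<Otimes>\<^sub>M (borel :: (real \<times> real) measure))"
    by (rule sets_pair_measure_cong) (auto simp: sH)
  have 1: "(\<lambda>x. \<integral>\<sigma>. PDV KA KB (f x) (g x) (k x) \<sigma> * p_joint KA KB (g x) (k x) \<sigma> \<partial>H) \<in> borel_measurable N"
    by (rule sigma_finite_measure.borel_measurable_lebesgue_integral[OF sf])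
       (simp add: measurable_cong_sets[OF S refl])
  have 2: "(\<lambda>x. \<integral>\<sigma>. p_joint KA KB (g x) (k x) \<sigma> \<partial>H) \<in> borel_measurable N"
    by (rule sigma_finite_measure.borel_measurable_lebesgue_integral[OF sf])
       (simp add: measurable_cong_sets[OF S refl])
  show ?thesis unfolding PDV_H_def using 1 2 by measurable
qed

lemma sf_L2: "sigma_finite_measure (lborel \<Otimes>\<^sub>M (lborel :: real measure))"
  by (intro sigma_finite_pair_measure lborel.sigma_finite_measure_axioms)
lemma sf_L3: "sigma_finite_measure (lborel \<Otimes>\<^sub>M lborel \<Otimes>\<^sub>M (lborel :: real measure))"
  by (intro sigma_finite_pair_measure lborel.sigma_finite_measure_axioms)
lemma sf_L4: "sigma_finite_measure (lborel \<Otimes>\<^sub>M lborel \<Otimes>\<^sub>M lborel \<Otimes>\<^sub>M (lborel :: real measure))"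
  by (intro sigma_finite_pair_measure lborel.sigma_finite_measure_axioms)

lemma iter4:
  assumes [measurable]: "g \<in> borel_measurable (lborel \<Otimes>\<^sub>M lborel \<Otimes>\<^sub>M lborel \<Otimes>\<^sub>M (lborel :: real measure))"
  shows "(\<integral>\<^sup>+y. g y \<partial>(lborel \<Otimes>\<^sub>M lborel \<Otimes>\<^sub>M lborel \<Otimes>\<^sub>M lborel))
    = (\<integral>\<^sup>+mA. \<integral>\<^sup>+sA. \<integral>\<^sup>+mB. \<integral>\<^sup>+sB. g (mA, sA, mB, sB) \<partial>lborel \<partial>lborel \<partial>lborel \<partial>lborel)"
proof -
  have "(\<integral>\<^sup>+y. g y \<partial>(lborel \<Otimes>\<^sub>M lborel \<Otimes>\<^sub>M lborel \<Otimes>\<^sub>M lborel))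
     = (\<integral>\<^sup>+mA. \<integral>\<^sup>+z. g (mA, z) \<partial>(lborel \<Otimes>\<^sub>M lborel \<Otimes>\<^sub>M lborel) \<partial>lborel)"
    by (rule sigma_finite_measure.nn_integral_fst[OF sf_L3, symmetric]) simp
  also have "\<dots> = (\<integral>\<^sup>+mA. \<integral>\<^sup>+sA. \<integral>\<^sup>+z. g (mA, sA, z) \<partial>(lborel \<Otimes>\<^sub>M lborel) \<partial>lborel \<partial>lborel)"
    by (intro nn_integral_cong sigma_finite_measure.nn_integral_fst[OF sf_L2, symmetric]) simp
  also have "\<dots> = (\<integral>\<^sup>+mA. \<integral>\<^sup>+sA. \<integral>\<^sup>+mB. \<integral>\<^sup>+sB. g (mA, sA, mB, sB) \<partial>lborel \<partial>lborel \<partial>lborel \<partial>lborel)"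
    by (intro nn_integral_cong lborel.nn_integral_fst[symmetric]) simp
  finally show ?thesis .
qed

lemma swap4:
  assumes [measurable]: "g \<in> borel_measurable (lborel \<Otimes>\<^sub>M lborel \<Otimes>\<^sub>M lborel \<Otimes>\<^sub>M (lborel :: real measure))"
  shows "(\<integral>\<^sup>+mA. \<integral>\<^sup>+sA. \<integral>\<^sup>+mB. \<integral>\<^sup>+sB. g (mA, sA, mB, sB) \<partial>lborel \<partial>lborel \<partial>lborel \<partial>lborel)
       = (\<integral>\<^sup>+sA. \<integral>\<^sup>+sB. \<integral>\<^sup>+mA. \<integral>\<^sup>+mB. g (mA, sA, mB, sB) \<partial>lborel \<partial>lborel \<partial>lborel \<partial>lborel)"
proof -
  have "(\<integral>\<^sup>+mA. \<integral>\<^sup>+sA. \<integral>\<^sup>+mB. \<integral>\<^sup>+sB. g (mA, sA, mB, sB) \<partial>lborel \<partial>lborel \<partial>lborel \<partial>lborel)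
      = (\<integral>\<^sup>+mA. \<integral>\<^sup>+sA. \<integral>\<^sup>+sB. \<integral>\<^sup>+mB. g (mA, sA, mB, sB) \<partial>lborel \<partial>lborel \<partial>lborel \<partial>lborel)"
    by (intro nn_integral_cong lborel_pair.Fubini') simp
  also have "\<dots> = (\<integral>\<^sup>+sA. \<integral>\<^sup>+mA. \<integral>\<^sup>+sB. \<integral>\<^sup>+mB. g (mA, sA, mB, sB) \<partial>lborel \<partial>lborel \<partial>lborel \<partial>lborel)"
    by (rule lborel_pair.Fubini'[symmetric]) simp
  also have "\<dots> = (\<integral>\<^sup>+sA. \<integral>\<^sup>+sB. \<integral>\<^sup>+mA. \<integral>\<^sup>+mB. g (mA, sA, mB, sB) \<partial>lborel \<partial>lborel \<partial>lborel \<partial>lborel)"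
    by (intro nn_integral_cong lborel_pair.Fubini'[symmetric]) simp
  finally show ?thesis .
qed

lemma reorder:
  assumes sf: "sigma_finite_measure H"
    and f[measurable]: "f \<in> borel_measurable (H \<Otimes>\<^sub>M (lborel \<Otimes>\<^sub>M lborel \<Otimes>\<^sub>M lborel \<Otimes>\<^sub>M (lborel :: real measure)))"
  shows "(\<integral>\<^sup>+\<omega>. f \<omega> \<partial>(H \<Otimes>\<^sub>M (lborel \<Otimes>\<^sub>M lborel \<Otimes>\<^sub>M lborel \<Otimes>\<^sub>M lborel)))
    = (\<integral>\<^sup>+sA. \<integral>\<^sup>+sB. \<integral>\<^sup>+\<sigma>. \<integral>\<^sup>+mA. \<integral>\<^sup>+mB. f (\<sigma>, mA, sA, mB, sB) \<partial>lborel \<partial>lborel \<partial>H \<partial>lborel \<partial>lborel)"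
proof -
  interpret P: pair_sigma_finite H lborel
    by (intro pair_sigma_finite.intro sf lborel.sigma_finite_measure_axioms)
  have "(\<integral>\<^sup>+\<omega>. f \<omega> \<partial>(H \<Otimes>\<^sub>M (lborel \<Otimes>\<^sub>M lborel \<Otimes>\<^sub>M lborel \<Otimes>\<^sub>M lborel)))
      = (\<integral>\<^sup>+\<sigma>. \<integral>\<^sup>+y. f (\<sigma>, y) \<partial>(lborel \<Otimes>\<^sub>M lborel \<Otimes>\<^sub>M lborel \<Otimes>\<^sub>M lborel) \<partial>H)"
    by (rule sigma_finite_measure.nn_integral_fst[OF sf_L4, symmetric]) simp
  also have "\<dots> = (\<integral>\<^sup>+\<sigma>. \<integral>\<^sup>+sA. \<integral>\<^sup>+sB. \<integral>\<^sup>+mA. \<integral>\<^sup>+mB. f (\<sigma>, mA, sA, mB, sB) \<partial>lborel \<partial>lborel \<partial>lborel \<partial>lborel \<partial>H)"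
  proof (rule nn_integral_cong)
    fix x assume x: "x \<in> space H"
    have m: "(\<lambda>y. f (x, y)) \<in> borel_measurable (lborel \<Otimes>\<^sub>M lborel \<Otimes>\<^sub>M lborel \<Otimes>\<^sub>M (lborel :: real measure))"
      using x by measurable
    show "(\<integral>\<^sup>+y. f (x, y) \<partial>(lborel \<Otimes>\<^sub>M lborel \<Otimes>\<^sub>M lborel \<Otimes>\<^sub>M lborel)) = (\<integral>\<^sup>+sA. \<integral>\<^sup>+sB. \<integral>\<^sup>+mA. \<integral>\<^sup>+mB. f (x, mA, sA, mB, sB) \<partial>lborel \<partial>lborel \<partial>lborel \<partial>lborel)"
      using iter4[OF m] swap4[OF m] by simp
  qed
  also have "\<dots> = (\<integral>\<^sup>+sA. \<integral>\<^sup>+\<sigma>. \<integral>\<^sup>+sB. \<integral>\<^sup>+mA. \<integral>\<^sup>+mB. f (\<sigma>, mA, sA, mB, sB) \<partial>lborel \<partial>lborel \<partial>lborel \<partial>H \<partial>lborel)"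
    by (rule P.Fubini'[symmetric]) simp
  also have "\<dots> = (\<integral>\<^sup>+sA. \<integral>\<^sup>+sB. \<integral>\<^sup>+\<sigma>. \<integral>\<^sup>+mA. \<integral>\<^sup>+mB. f (\<sigma>, mA, sA, mB, sB) \<partial>lborel \<partial>lborel \<partial>H \<partial>lborel \<partial>lborel)"
    by (intro nn_integral_cong P.Fubini'[symmetric]) simp
  finally show ?thesis .
qed

definition dens :: "nat \<Rightarrow> nat \<Rightarrow> real \<Rightarrow> bf_outcome \<Rightarrow> ennreal" where
  "dens KA KB \<mu> = (\<lambda>(\<sigma>, (mA, sA, mB, sB)). ennreal (
          normal_density \<mu> (sqrt (fst \<sigma> / real KA)) mA * p_nu (real KA - 1) sA (fst \<sigma>)
        * normal_density \<mu> (sqrt (snd \<sigma> / real KB)) mB * p_nu (real KB - 1) sB (snd \<sigma>)))"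

lemma nd_int: "0 < s \<Longrightarrow> (\<integral>\<^sup>+x. ennreal (normal_density \<mu> s x) \<partial>lborel) = 1"
proof -
  assume s: "0 < s"
  interpret prob_space "density lborel (normal_density \<mu> s)" using prob_space_normal_density s by auto
  show ?thesis using emeasure_space_1 by (simp add: emeasure_density)
qed

lemma dens_eq:
  assumes "0 < fst \<sigma>" "0 < snd \<sigma>" "2 \<le> KA" "2 \<le> KB"
  shows "dens KA KB \<mu> (\<sigma>, mA, sA, mB, sB) = ennreal (p_joint KA KB sA sB \<sigma>) *
     (ennreal (normal_density \<mu> (sqrt (fst \<sigma> / real KA)) mA) * ennreal (normal_density \<mu> (sqrt (snd \<sigma> / real KB)) mB))"
proof -
  have "0 \<le> p_nu (real KA - 1) sA (fst \<sigma>)" "0 \<le> p_nu (real KB - 1) sB (snd \<sigma>)"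
    using assms by (auto intro!: p_nu_nonneg)
  then show ?thesis
    by (simp add: dens_def p_joint_def ennreal_mult'[symmetric] ennreal_mult[symmetric] mult_ac)
qed

lemma inner0:
  assumes "0 < fst \<sigma>" "0 < snd \<sigma>" "2 \<le> KA" "2 \<le> KB"
  shows "(\<integral>\<^sup>+mA. \<integral>\<^sup>+mB. dens KA KB \<mu> (\<sigma>, mA, sA, mB, sB) * c \<partial>lborel \<partial>lborel) = c * ennreal (p_joint KA KB sA sB \<sigma>)"
proof -
  have a: "0 < sqrt (fst \<sigma> / real KA)" "0 < sqrt (snd \<sigma> / real KB)" using assms by auto
  have "(\<integral>\<^sup>+mA. \<integral>\<^sup>+mB. dens KA KB \<mu> (\<sigma>, mA, sA, mB, sB) * c \<partial>lborel \<partial>lborel)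
    = (\<integral>\<^sup>+mA. (c * ennreal (p_joint KA KB sA sB \<sigma>) * ennreal (normal_density \<mu> (sqrt (fst \<sigma> / real KA)) mA)) * (\<integral>\<^sup>+mB. ennreal (normal_density \<mu> (sqrt (snd \<sigma> / real KB)) mB) \<partial>lborel) \<partial>lborel)"
    unfolding dens_eq[OF assms]
    by (intro nn_integral_cong, subst nn_integral_cmult[symmetric]) (auto simp: mult_ac)
  also have "\<dots> = (\<integral>\<^sup>+mA. (c * ennreal (p_joint KA KB sA sB \<sigma>)) * ennreal (normal_density \<mu> (sqrt (fst \<sigma> / real KA)) mA) \<partial>lborel)"
    using a by (simp add: nd_int)
  also have "\<dots> = c * ennreal (p_joint KA KB sA sB \<sigma>)"
    using a by (subst nn_integral_cmult) (auto simp: nd_int)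
  finally show ?thesis .
qed

lemma inner1:
  assumes "0 < fst \<sigma>" "0 < snd \<sigma>" "2 \<le> KA" "2 \<le> KB" "0 < sA" "0 < sB" "0 \<le> t0"
  shows "(\<integral>\<^sup>+mA. \<integral>\<^sup>+mB. dens KA KB \<mu> (\<sigma>, mA, sA, mB, sB) * (c * indicator {z. t0 * sqrt (sA / real KA + sB / real KB) \<le> \<bar>z\<bar>} (mA - mB)) \<partial>lborel \<partial>lborel)
     = c * ennreal (p_joint KA KB sA sB \<sigma> * PDV KA KB t0 sA sB \<sigma>)"
proof -
  define a where "a = sqrt (fst \<sigma> / real KA)"
  define b where "b = sqrt (snd \<sigma> / real KB)"
  define r where "r = t0 * sqrt (sA / real KA + sB / real KB)"
  have a: "0 < a" "0 < b" using assms by (auto simp: a_def b_def)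
  have r: "0 \<le> r" using assms by (auto simp: r_def)
  have pj: "0 \<le> p_joint KA KB sA sB \<sigma>" using assms by (auto simp: p_joint_def intro!: mult_nonneg_nonneg p_nu_nonneg)
  have "(\<integral>\<^sup>+mA. \<integral>\<^sup>+mB. dens KA KB \<mu> (\<sigma>, mA, sA, mB, sB) * (c * indicator {z. r \<le> \<bar>z\<bar>} (mA - mB)) \<partial>lborel \<partial>lborel)
    = (\<integral>\<^sup>+mA. (c * ennreal (p_joint KA KB sA sB \<sigma>)) * (\<integral>\<^sup>+mB. ennreal (normal_density \<mu> a mA * normal_density \<mu> b mB) * indicator {z. r \<le> \<bar>z\<bar>} (mA - mB) \<partial>lborel) \<partial>lborel)"
    unfolding dens_eq[OF assms(1-4)] a_def[symmetric] b_def[symmetric]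
    by (intro nn_integral_cong, subst nn_integral_cmult[symmetric]) (auto simp: mult_ac ennreal_mult')
  also have "\<dots> = (c * ennreal (p_joint KA KB sA sB \<sigma>)) * ennreal (2 * Phi (- (r / sqrt (a\<^sup>2 + b\<^sup>2))))"
    by (subst nn_integral_cmult) (auto simp: nd_diff[OF a r])
  also have "2 * Phi (- (r / sqrt (a\<^sup>2 + b\<^sup>2))) = PDV KA KB t0 sA sB \<sigma>"
  proof -
    have a2: "a\<^sup>2 = fst \<sigma> / real KA" "b\<^sup>2 = snd \<sigma> / real KB" unfolding a_def b_def using assms by simp_all
    show ?thesis using assms by (simp add: PDV_def r_def a2 real_sqrt_divide)
  qed
  finally show ?thesis unfolding r_def using pj PDV_nonneg by (simp add: ennreal_mult mult_ac)
qed

lemma fst_borel[measurable]: "fst \<in> borel_measurable (borel :: (real \<times> real) measure)"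
  using measurable_fst[of "borel::real measure" "borel::real measure"] by (simp add: borel_prod)
lemma snd_borel[measurable]: "snd \<in> borel_measurable (borel :: (real \<times> real) measure)"
  using measurable_snd[of "borel::real measure" "borel::real measure"] by (simp add: borel_prod)

lemma fst_borel'[measurable (raw)]: "g \<in> M \<rightarrow>\<^sub>M (borel :: (real \<times> real) measure) \<Longrightarrow> (\<lambda>x. fst (g x)) \<in> borel_measurable M"
  using measurable_compose[OF _ fst_borel] by blast
lemma snd_borel'[measurable (raw)]: "g \<in> M \<rightarrow>\<^sub>M (borel :: (real \<times> real) measure) \<Longrightarrow> (\<lambda>x. snd (g x)) \<in> borel_measurable M"
  using measurable_compose[OF _ snd_borel] by blast

lemma nd_measurable[measurable (raw)]:
  assumes [measurable]: "f \<in> borel_measurable M" "g \<in> borel_measurable M"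
  shows "(\<lambda>x. normal_density \<mu> (f x) (g x)) \<in> borel_measurable M"
  unfolding normal_density_def by measurable

lemma meas_HL:
  assumes "sets H = sets (borel :: (real \<times> real) measure)"
    and "f \<in> borel_measurable ((borel :: (real \<times> real) measure) \<Otimes>\<^sub>M (lborel \<Otimes>\<^sub>M lborel \<Otimes>\<^sub>M lborel \<Otimes>\<^sub>M (lborel :: real measure)))"
  shows "f \<in> borel_measurable (H \<Otimes>\<^sub>M (lborel \<Otimes>\<^sub>M lborel \<Otimes>\<^sub>M lborel \<Otimes>\<^sub>M (lborel :: real measure)))"
proof -
  have S: "sets (H \<Otimes>\<^sub>M (lborel \<Otimes>\<^sub>M lborel \<Otimes>\<^sub>M lborel \<Otimes>\<^sub>M (lborel :: real measure))) = sets ((borel :: (real \<times> real) measure) \<Otimes>\<^sub>M (lborel \<Otimes>\<^sub>M lborel \<Otimes>\<^sub>M lborel \<Otimes>\<^sub>M (lborel :: real measure)))"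
    by (rule sets_pair_measure_cong) (auto simp: assms(1))
  show ?thesis using assms(2) by (simp add: measurable_cong_sets[OF S refl])
qed

lemma dens_meas: "dens KA KB \<mu> \<in> borel_measurable ((borel :: (real \<times> real) measure) \<Otimes>\<^sub>M (lborel \<Otimes>\<^sub>M lborel \<Otimes>\<^sub>M lborel \<Otimes>\<^sub>M (lborel :: real measure)))"
  unfolding dens_def by measurable

lemma phi_meas:
  assumes "sigma_finite_measure H" "sets H = sets (borel :: (real \<times> real) measure)"
  shows "(\<lambda>\<omega>. PDV_H KA KB H (T_BF KA KB \<omega>) (sighatA \<omega>) (sighatB \<omega>)) \<in> borel_measurable ((borel :: (real \<times> real) measure) \<Otimes>\<^sub>M (lborel \<Otimes>\<^sub>M lborel \<Otimes>\<^sub>M lborel \<Otimes>\<^sub>M (lborel :: real measure)))"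
  unfolding T_BF_def muhatA_def muhatB_def sighatA_def sighatB_def
  by (intro PDV_H_meas[OF assms]) measurable

theorem proposition3:
  fixes H :: "(real \<times> real) measure" and KA KB :: nat and \<mu>A \<mu>B :: real
  assumes "2 \<le> KA" and "2 \<le> KB"
    and "prob_space H" and "sets H = sets (borel :: (real \<times> real) measure)"
    and "AE \<sigma> in H. 0 < fst \<sigma> \<and> 0 < snd \<sigma>"
    and "\<mu>A = \<mu>B"
  defines "M \<equiv> bf_model H KA KB \<mu>A \<mu>B"
  defines "E \<equiv> (\<lambda>\<alpha>. {\<omega> \<in> space M.
              PDV_H KA KB H (T_BF KA KB \<omega>) (sighatA \<omega>) (sighatB \<omega>) \<le> \<alpha>})"
  shows "(\<forall>\<alpha>\<in>{0<..<1}. AE \<omega> in M.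
            real_cond_exp M (vimage_algebra (space M) (\<lambda>\<omega>. (sighatA \<omega>, sighatB \<omega>)) borel)
              (indicator (E \<alpha>)) \<omega> = \<alpha>)
       \<and> (\<forall>\<alpha>\<in>{0<..<1}. measure M (E \<alpha>) = \<alpha>)"
proof -
  interpret H: prob_space H by (rule assms(3))
  have sfH: "sigma_finite_measure H" using assms(3) by (rule prob_space_imp_sigma_finite)
  note sH = assms(4)
  note pos = assms(5)
  have KA: "2 \<le> KA" and KB: "2 \<le> KB" using assms by auto
  let ?L = "lborel \<Otimes>\<^sub>M lborel \<Otimes>\<^sub>M lborel \<Otimes>\<^sub>M (lborel :: real measure)"
  have spH: "space H = UNIV" using sets_eq_imp_space_eq[OF sH] by simp
  have Mdef: "M = density (H \<Otimes>\<^sub>M ?L) (dens KA KB \<mu>B)"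
    unfolding M_def bf_model_def dens_def assms(6) by simp
  have spL: "space (H \<Otimes>\<^sub>M ?L) = UNIV" by (simp add: space_pair_measure spH)
  have spM: "space M = UNIV" by (simp add: Mdef spL)
  have sM: "sets M = sets (H \<Otimes>\<^sub>M ?L)" by (simp add: Mdef)
  have dm[measurable]: "dens KA KB \<mu>B \<in> borel_measurable (H \<Otimes>\<^sub>M ?L)" by (rule meas_HL[OF sH dens_meas])
  have intM: "(\<integral>\<^sup>+\<omega>. h \<omega> \<partial>M) = (\<integral>\<^sup>+sA. \<integral>\<^sup>+sB. \<integral>\<^sup>+\<sigma>. \<integral>\<^sup>+mA. \<integral>\<^sup>+mB.
       dens KA KB \<mu>B (\<sigma>, mA, sA, mB, sB) * h (\<sigma>, mA, sA, mB, sB) \<partial>lborel \<partial>lborel \<partial>H \<partial>lborel \<partial>lborel)"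
    if hm[measurable]: "h \<in> borel_measurable (H \<Otimes>\<^sub>M ?L)" for h
  proof -
    have "(\<integral>\<^sup>+\<omega>. h \<omega> \<partial>M) = (\<integral>\<^sup>+\<omega>. dens KA KB \<mu>B \<omega> * h \<omega> \<partial>(H \<Otimes>\<^sub>M ?L))"
      unfolding Mdef using dm hm by (rule nn_integral_density)
    also have "\<dots> = (\<integral>\<^sup>+sA. \<integral>\<^sup>+sB. \<integral>\<^sup>+\<sigma>. \<integral>\<^sup>+mA. \<integral>\<^sup>+mB.
       dens KA KB \<mu>B (\<sigma>, mA, sA, mB, sB) * h (\<sigma>, mA, sA, mB, sB) \<partial>lborel \<partial>lborel \<partial>H \<partial>lborel \<partial>lborel)"
      by (rule reorder[OF sfH]) measurable
    finally show ?thesis .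
  qed
  define S where "S = (\<lambda>\<omega>. (sighatA \<omega>, sighatB \<omega>))"
  have Sm: "S \<in> (H \<Otimes>\<^sub>M ?L) \<rightarrow>\<^sub>M (borel :: (real \<times> real) measure)"
    unfolding S_def sighatA_def sighatB_def borel_prod[symmetric] by measurable
  define SB where "SB B = S -` B" for B
  have SBm: "SB B \<in> sets (H \<Otimes>\<^sub>M ?L)" if "B \<in> sets borel" for B
    using measurable_sets[OF Sm that] by (simp add: SB_def spL)
  have ind_SB: "indicator (SB B) (\<sigma>, mA, sA, mB, sB) = (indicator B (sA, sB) :: ennreal)" for B \<sigma> mA sA mB sB
    by (simp add: SB_def S_def sighatA_def sighatB_def indicator_def)
  define Q where "Q B = (\<integral>\<^sup>+sA. \<integral>\<^sup>+sB. indicator B (sA, sB) * (\<integral>\<^sup>+\<sigma>. ennreal (p_joint KA KB sA sB \<sigma>) \<partial>H) \<partial>lborel \<partial>lborel)" for B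
  have em0: "emeasure M (SB B) = Q B" if B: "B \<in> sets borel" for B
  proof -
    have "emeasure M (SB B) = (\<integral>\<^sup>+\<omega>. indicator (SB B) \<omega> \<partial>M)"
      using SBm[OF B] sM by simp
    also have "\<dots> = Q B"
      unfolding intM[OF borel_measurable_indicator[OF SBm[OF B]]] Q_def ind_SB
    proof (intro nn_integral_cong)
      fix sA sB :: real
      have "(\<integral>\<^sup>+\<sigma>. \<integral>\<^sup>+mA. \<integral>\<^sup>+mB. dens KA KB \<mu>B (\<sigma>, mA, sA, mB, sB) * indicator B (sA, sB) \<partial>lborel \<partial>lborel \<partial>H)
          = (\<integral>\<^sup>+\<sigma>. indicator B (sA, sB) * ennreal (p_joint KA KB sA sB \<sigma>) \<partial>H)"
        apply (rule nn_integral_cong_AE) using pos apply eventually_elim by (auto intro!: inner0 KA KB)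
      also have "\<dots> = indicator B (sA, sB) * (\<integral>\<^sup>+\<sigma>. ennreal (p_joint KA KB sA sB \<sigma>) \<partial>H)"
        by (rule nn_integral_cmult) (use sH in measurable)
      finally show "(\<integral>\<^sup>+\<sigma>. \<integral>\<^sup>+mA. \<integral>\<^sup>+mB. dens KA KB \<mu>B (\<sigma>, mA, sA, mB, sB) * indicator B (sA, sB) \<partial>lborel \<partial>lborel \<partial>H)
          = indicator B (sA, sB) * (\<integral>\<^sup>+\<sigma>. ennreal (p_joint KA KB sA sB \<sigma>) \<partial>H)" .
    qed
    finally show ?thesis .
  qed
  have Em: "E \<alpha> \<in> sets (H \<Otimes>\<^sub>M ?L)" for \<alpha>
  proof -
    have [measurable]: "(\<lambda>\<omega>. PDV_H KA KB H (T_BF KA KB \<omega>) (sighatA \<omega>) (sighatB \<omega>)) \<in> borel_measurable (H \<Otimes>\<^sub>M ?L)"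
      by (rule meas_HL[OF sH phi_meas[OF sfH sH]])
    have "E \<alpha> = {\<omega> \<in> space (H \<Otimes>\<^sub>M ?L). PDV_H KA KB H (T_BF KA KB \<omega>) (sighatA \<omega>) (sighatB \<omega>) \<le> \<alpha>}"
      unfolding E_def spM spL ..
    also have "\<dots> \<in> sets (H \<Otimes>\<^sub>M ?L)" by measurable
    finally show ?thesis .
  qed
  have Wm[measurable]: "(\<lambda>\<sigma>. p_joint KA KB sA sB \<sigma>) \<in> borel_measurable H" for sA sB
    using sH by measurable
  have em1: "emeasure M (E \<alpha> \<inter> SB B) = ennreal \<alpha> * Q B" if B: "B \<in> sets borel" and al: "0 < \<alpha>" "\<alpha> < 1" for B \<alpha>
  proof -
    have m: "E \<alpha> \<inter> SB B \<in> sets (H \<Otimes>\<^sub>M ?L)" using Em SBm[OF B] by blast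
    have pw: "(\<integral>\<^sup>+\<sigma>. \<integral>\<^sup>+mA. \<integral>\<^sup>+mB. dens KA KB \<mu>B (\<sigma>, mA, sA, mB, sB) * indicator (E \<alpha> \<inter> SB B) (\<sigma>, mA, sA, mB, sB) \<partial>lborel \<partial>lborel \<partial>H)
       = ennreal \<alpha> * (indicator B (sA, sB) * (\<integral>\<^sup>+\<sigma>. ennreal (p_joint KA KB sA sB \<sigma>) \<partial>H))" for sA sB
    proof (cases "0 < sA \<and> 0 < sB")
      case True
      then have sA: "0 < sA" and sB: "0 < sB" by auto
      obtain t0 where t0: "0 \<le> t0" "PDV_H KA KB H t0 sA sB = \<alpha>"
        and th: "\<And>t. PDV_H KA KB H t sA sB \<le> \<alpha> \<longleftrightarrow> t0 \<le> \<bar>t\<bar>"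
        using G_thresh[OF KA KB assms(3) sH pos sA sB al] by blast
      define c where "c = sqrt (sA / real KA + sB / real KB)"
      have c: "0 < c" using sA sB KA KB by (simp add: c_def add_pos_pos)
      have ind: "indicator (E \<alpha> \<inter> SB B) (\<sigma>, mA, sA, mB, sB) = (indicator B (sA, sB) * indicator {z. t0 * c \<le> \<bar>z\<bar>} (mA - mB) :: ennreal)" for \<sigma> mA mB
      proof -
        have T: "T_BF KA KB (\<sigma>, mA, sA, mB, sB) = (mA - mB) / c"
          by (simp add: T_BF_def c_def muhatA_def muhatB_def sighatA_def sighatB_def)
        have "(\<sigma>, mA, sA, mB, sB) \<in> E \<alpha> \<longleftrightarrow> PDV_H KA KB H ((mA - mB) / c) sA sB \<le> \<alpha>"
          unfolding E_def spM by (simp add: T sighatA_def sighatB_def)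
        also have "\<dots> \<longleftrightarrow> t0 \<le> \<bar>mA - mB\<bar> / c" using c by (simp add: th abs_divide)
        also have "\<dots> \<longleftrightarrow> t0 * c \<le> \<bar>mA - mB\<bar>" using c by (simp add: pos_le_divide_eq)
        finally show ?thesis by (auto simp: indicator_def SB_def S_def sighatA_def sighatB_def)
      qed
      have nn: "AE \<sigma> in H. 0 \<le> PDV KA KB t0 sA sB \<sigma> * p_joint KA KB sA sB \<sigma>"
        using W_pos[OF KA KB assms(3) sH pos sA sB] by eventually_elim (simp add: PDV_nonneg)
      have nn2: "AE \<sigma> in H. 0 \<le> p_joint KA KB sA sB \<sigma>"
        using W_pos[OF KA KB assms(3) sH pos sA sB] by eventually_elim simp
      have int1: "(\<integral>\<^sup>+\<sigma>. ennreal (p_joint KA KB sA sB \<sigma> * PDV KA KB t0 sA sB \<sigma>) \<partial>H) = ennreal (\<integral>\<sigma>. PDV KA KB t0 sA sB \<sigma> * p_joint KA KB sA sB \<sigma> \<partial>H)"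
        using nn_integral_eq_integral[OF PW_int[OF KA KB assms(3) sH pos sA sB, of t0] nn] by (simp add: mult.commute)
      have int2: "(\<integral>\<^sup>+\<sigma>. ennreal (p_joint KA KB sA sB \<sigma>) \<partial>H) = ennreal (\<integral>\<sigma>. p_joint KA KB sA sB \<sigma> \<partial>H)"
        using nn_integral_eq_integral[OF W_int[OF KA KB assms(3) sH pos sA sB] nn2] by simp
      have Z: "0 < (\<integral>\<sigma>. p_joint KA KB sA sB \<sigma> \<partial>H)" by (rule Z_pos[OF KA KB assms(3) sH pos sA sB])
      have eq: "(\<integral>\<sigma>. PDV KA KB t0 sA sB \<sigma> * p_joint KA KB sA sB \<sigma> \<partial>H) = \<alpha> * (\<integral>\<sigma>. p_joint KA KB sA sB \<sigma> \<partial>H)"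
        using t0(2) Z unfolding PDV_H_def by (simp add: field_simps)
      have "(\<integral>\<^sup>+\<sigma>. \<integral>\<^sup>+mA. \<integral>\<^sup>+mB. dens KA KB \<mu>B (\<sigma>, mA, sA, mB, sB) * indicator (E \<alpha> \<inter> SB B) (\<sigma>, mA, sA, mB, sB) \<partial>lborel \<partial>lborel \<partial>H)
          = (\<integral>\<^sup>+\<sigma>. indicator B (sA, sB) * ennreal (p_joint KA KB sA sB \<sigma> * PDV KA KB t0 sA sB \<sigma>) \<partial>H)"
        unfolding ind apply (rule nn_integral_cong_AE) using pos apply eventually_elim
        by (auto simp: c_def intro!: inner1 KA KB sA sB t0(1))
      also have "\<dots> = indicator B (sA, sB) * ennreal (\<integral>\<sigma>. PDV KA KB t0 sA sB \<sigma> * p_joint KA KB sA sB \<sigma> \<partial>H)"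
        by (subst nn_integral_cmult) (use sH in measurable, simp add: int1)
      also have "\<dots> = ennreal \<alpha> * (indicator B (sA, sB) * (\<integral>\<^sup>+\<sigma>. ennreal (p_joint KA KB sA sB \<sigma>) \<partial>H))"
        unfolding int2 eq using al Z by (simp add: ennreal_mult mult_ac)
      finally show ?thesis .
    next
      case False
      have d0: "dens KA KB \<mu>B (\<sigma>, mA, sA, mB, sB) = 0" for \<sigma> mA mB
        using False by (auto simp: dens_def p_nu_def)
      have p0: "p_joint KA KB sA sB \<sigma> = 0" for \<sigma>
        using False by (auto simp: p_joint_def p_nu_def)
      show ?thesis by (simp add: d0 p0)
    qed
    have "emeasure M (E \<alpha> \<inter> SB B) = (\<integral>\<^sup>+\<omega>. indicator (E \<alpha> \<inter> SB B) \<omega> \<partial>M)" using m sM by simp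
    also have "\<dots> = (\<integral>\<^sup>+sA. \<integral>\<^sup>+sB. ennreal \<alpha> * (indicator B (sA, sB) * (\<integral>\<^sup>+\<sigma>. ennreal (p_joint KA KB sA sB \<sigma>) \<partial>H)) \<partial>lborel \<partial>lborel)"
      unfolding intM[OF borel_measurable_indicator[OF m]] pw ..
    also have "\<dots> = (\<integral>\<^sup>+sA. ennreal \<alpha> * (\<integral>\<^sup>+sB. indicator B (sA, sB) * (\<integral>\<^sup>+\<sigma>. ennreal (p_joint KA KB sA sB \<sigma>) \<partial>H) \<partial>lborel) \<partial>lborel)"
      by (intro nn_integral_cong nn_integral_cmult) (use B sH in measurable)
    also have "\<dots> = ennreal \<alpha> * Q B"
      unfolding Q_def by (intro nn_integral_cmult) (use B sH in measurable)
    finally show ?thesis .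
  qed
  have QU: "Q UNIV = 1"
  proof -
    interpret P: pair_sigma_finite H lborel
      by (intro pair_sigma_finite.intro sfH lborel.sigma_finite_measure_axioms)
    have SP: "sets (H \<Otimes>\<^sub>M (lborel :: real measure)) = sets ((borel :: (real \<times> real) measure) \<Otimes>\<^sub>M (lborel :: real measure))"
      by (rule sets_pair_measure_cong) (auto simp: sH)
    have m1: "(\<lambda>(\<sigma>, sB). ennreal (p_joint KA KB sA sB \<sigma>)) \<in> borel_measurable (H \<Otimes>\<^sub>M lborel)" for sA
      unfolding measurable_cong_sets[OF SP refl] by measurable
    have m2: "(\<lambda>(\<sigma>, sA). \<integral>\<^sup>+sB. ennreal (p_joint KA KB sA sB \<sigma>) \<partial>lborel) \<in> borel_measurable (H \<Otimes>\<^sub>M lborel)"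
      unfolding measurable_cong_sets[OF SP refl] by measurable
    have "Q UNIV = (\<integral>\<^sup>+sA. \<integral>\<^sup>+sB. \<integral>\<^sup>+\<sigma>. ennreal (p_joint KA KB sA sB \<sigma>) \<partial>H \<partial>lborel \<partial>lborel)"
      by (simp add: Q_def)
    also have "\<dots> = (\<integral>\<^sup>+sA. \<integral>\<^sup>+\<sigma>. \<integral>\<^sup>+sB. ennreal (p_joint KA KB sA sB \<sigma>) \<partial>lborel \<partial>H \<partial>lborel)"
      by (intro nn_integral_cong P.Fubini'[OF m1])
    also have "\<dots> = (\<integral>\<^sup>+\<sigma>. \<integral>\<^sup>+sA. \<integral>\<^sup>+sB. ennreal (p_joint KA KB sA sB \<sigma>) \<partial>lborel \<partial>lborel \<partial>H)"
      using P.Fubini'[OF m2] by simp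
    also have "\<dots> = (\<integral>\<^sup>+\<sigma>. 1 \<partial>H)"
    proof (rule nn_integral_cong_AE)
      show "AE \<sigma> in H. (\<integral>\<^sup>+sA. \<integral>\<^sup>+sB. ennreal (p_joint KA KB sA sB \<sigma>) \<partial>lborel \<partial>lborel) = 1"
        using pos
      proof eventually_elim
        case (elim \<sigma>)
        have nA: "0 < real KA - 1" and nB: "0 < real KB - 1" using KA KB by auto
        have "(\<integral>\<^sup>+sA. \<integral>\<^sup>+sB. ennreal (p_joint KA KB sA sB \<sigma>) \<partial>lborel \<partial>lborel)
          = (\<integral>\<^sup>+sA. ennreal (p_nu (real KA - 1) sA (fst \<sigma>)) * (\<integral>\<^sup>+sB. ennreal (p_nu (real KB - 1) sB (snd \<sigma>)) \<partial>lborel) \<partial>lborel)"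
          using elim nA nB
          by (intro nn_integral_cong, subst nn_integral_cmult[symmetric]) (auto simp: p_joint_def ennreal_mult p_nu_nonneg)
        also have "\<dots> = 1" using elim nA nB by (simp add: p_nu_int)
        finally show ?case .
      qed
    qed
    also have "\<dots> = 1" using H.emeasure_space_1 by simp
    finally show ?thesis .
  qed
  have SBU: "SB UNIV = UNIV" by (simp add: SB_def)
  have prob: "prob_space M"
    by (rule prob_spaceI) (use em0[of UNIV] QU SBU spM in simp)
  interpret PM: prob_space M by (rule prob)
  have mE: "measure M (E \<alpha> \<inter> SB B) = \<alpha> * measure M (SB B)" if B: "B \<in> sets borel" and al: "0 < \<alpha>" "\<alpha> < 1" for B \<alpha>
  proof -
    have "ennreal (measure M (E \<alpha> \<inter> SB B)) = ennreal (\<alpha> * measure M (SB B))"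
      using em1[OF B al] em0[OF B] al by (simp add: PM.emeasure_eq_measure ennreal_mult)
    then show ?thesis using al by (simp add: ennreal_inj)
  qed
  have part2: "\<forall>\<alpha>\<in>{0<..<1}. measure M (E \<alpha>) = \<alpha>"
  proof
    fix \<alpha> :: real assume "\<alpha> \<in> {0<..<1}"
    then have al: "0 < \<alpha>" "\<alpha> < 1" by auto
    have "E \<alpha> \<inter> SB UNIV = E \<alpha>" by (simp add: SBU)
    then show "measure M (E \<alpha>) = \<alpha>" using mE[of UNIV \<alpha>] al SBU spM PM.prob_space by simp
  qed
  have Fdef: "vimage_algebra (space M) (\<lambda>\<omega>. (sighatA \<omega>, sighatB \<omega>)) borel = vimage_algebra (space M) S borel"
    by (simp add: S_def)
  have SmM: "S \<in> M \<rightarrow>\<^sub>M (borel :: (real \<times> real) measure)"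
    using Sm by (simp add: measurable_cong_sets[OF sM refl])
  have sF: "sets (vimage_algebra (space M) S borel) = {S -` A \<inter> space M | A. A \<in> sets borel}"
    by (rule sets_vimage_algebra2) simp
  have sub: "subalgebra M (vimage_algebra (space M) S borel)"
    unfolding subalgebra_def using sets_image_in_sets[OF refl SmM] by simp
  have fms: "finite_measure_subalgebra M (vimage_algebra (space M) S borel)"
    unfolding finite_measure_subalgebra_def finite_measure_subalgebra_axioms_def
    using sub prob by (simp add: prob_space_def)
  have sfs: "sigma_finite_subalgebra M (vimage_algebra (space M) S borel)"
    by (rule finite_measure_subalgebra_is_sigma_finite[OF fms])
  have part1: "\<forall>\<alpha>\<in>{0<..<1}. AE \<omega> in M. real_cond_exp M (vimage_algebra (space M) S borel) (indicator (E \<alpha>)) \<omega> = \<alpha>"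
  proof
    fix \<alpha> :: real assume "\<alpha> \<in> {0<..<1}"
    then have al: "0 < \<alpha>" "\<alpha> < 1" by auto
    have EM: "E \<alpha> \<in> sets M" using Em sM by simp
    show "AE \<omega> in M. real_cond_exp M (vimage_algebra (space M) S borel) (indicator (E \<alpha>)) \<omega> = \<alpha>"
    proof (rule sigma_finite_subalgebra.real_cond_exp_charact[OF sfs])
      fix A assume "A \<in> sets (vimage_algebra (space M) S borel)"
      then obtain B where B: "B \<in> sets borel" and A: "A = S -` B \<inter> space M" unfolding sF by auto
      have ASB: "A = SB B" by (simp add: A SB_def spM)
      have SBM: "SB B \<in> sets M" using SBm[OF B] sM by simp
      have "(\<integral>x\<in>A. (indicator (E \<alpha>) x :: real) \<partial>M) = (\<integral>x. indicator (E \<alpha> \<inter> SB B) x \<partial>M)"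
        unfolding set_lebesgue_integral_def ASB by (intro Bochner_Integration.integral_cong) (auto simp: indicator_def)
      also have "\<dots> = measure M (E \<alpha> \<inter> SB B)" by (simp add: spM)
      also have "\<dots> = \<alpha> * measure M (SB B)" by (rule mE[OF B al])
      also have "\<dots> = (\<integral>x\<in>A. \<alpha> \<partial>M)" unfolding ASB using SBM by (simp add: set_integral_const PM.emeasure_eq_measure)
      finally show "(\<integral>x\<in>A. (indicator (E \<alpha>) x :: real) \<partial>M) = (\<integral>x\<in>A. \<alpha> \<partial>M)" .
    next
      show "integrable M (indicator (E \<alpha>) :: _ \<Rightarrow> real)" using EM by (simp add: PM.emeasure_eq_measure)
      show "integrable M (\<lambda>_. \<alpha>)" by simp
      show "(\<lambda>_. \<alpha>) \<in> borel_measurable (vimage_algebra (space M) S borel)" by simp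
    qed
  qed
  show ?thesis using part1 part2 unfolding Fdef by blast
qed

end
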